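(* Let $R$ be a finite Blaschke product and $m\ge1$. Then there exists an isomorphism of Hilbert bimodules over $A=C(\mathbb{T})$, $\Psi:X_R^{\otimes m}\to X_{R^{\circ m}}$, such that $\Psi(\xi_1\otimes\cdots\otimes\xi_m)=\xi_1\,(\xi_2\circ R)\,(\xi_3\circ R^{\circ2})\cdots(\xi_m\circ R^{\circ(m-1)})$ for $\xi_1,\dots,\xi_m\in X_R$.
   Context: A finite Blaschke product is $R(z)=\lambda\prod_{k=1}^n\frac{z-z_k}{1-\overline{z_k}z}$ with $\lambda\in\mathbb{T}$ and $z_k$ in the open unit disk; its iterates are again finite Blaschke products. For a finite Blaschke product $Q$, $X_Q=C(\mathbb{T})$ is the Hilbert bimodule over $A=C(\mathbb{T})$ with $(a\cdot\xi\cdot b)(z)=a(z)\xi(z)b(Q(z))$ and $\langle\xi,\eta\rangle_A(w)=\sum_{z\in Q^{-1}(w)}\frac{1}{|Q'(z)|}\overline{\xi(z)}\eta(z)$. $X_R^{\otimes m}$ denotes the $m$-fold interior tensor product of $X_R$ over $A$ (balanced over the right/left actions). *)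

theory Defs
  imports "HOL-Analysis.Analysis"
begin

text \<open>Elements of A = C(T) and of the bimodules X_Q are represented by functions
  complex => complex that are continuous on the unit circle and vanish off it
  (canonical representatives, so HOL equality is equality in C(T)).\<close>

type_synonym cfun = "complex \<Rightarrow> complex"

definition torus :: "complex set" where
  "torus = sphere 0 1"

definition CT :: "cfun set" where
  "CT = {f. continuous_on torus f \<and> (\<forall>z. z \<notin> torus \<longrightarrow> f z = 0)}"

definition fin_blaschke :: "cfun \<Rightarrow> bool" where
  "fin_blaschke R \<longleftrightarrow> (\<exists>lam zs. zs \<noteq> [] \<and> norm lam = 1 \<and> (\<forall>a\<in>set zs. norm a < 1) \<and>
      R = (\<lambda>z. lam * (\<Prod>a\<leftarrow>zs. (z - a) / (1 - cnj a * z))))"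

definition lact :: "cfun \<Rightarrow> cfun \<Rightarrow> cfun" where
  "lact a \<xi> = (\<lambda>z. a z * \<xi> z)"

definition ract :: "cfun \<Rightarrow> cfun \<Rightarrow> cfun \<Rightarrow> cfun" where
  "ract Q \<xi> b = (\<lambda>z. \<xi> z * b (Q z))"

definition bm_inner :: "cfun \<Rightarrow> cfun \<Rightarrow> cfun \<Rightarrow> cfun" where
  "bm_inner Q \<xi> \<eta> = (\<lambda>w. if w \<in> torus then
       (\<Sum>z\<in>{z\<in>torus. Q z = w}. cnj (\<xi> z) * \<eta> z / complex_of_real (norm (deriv Q z)))
     else 0)"

text \<open>Interior tensor power X_R^{(m)}: elementary tensors x 0 (x) ... (x) x (m-1)
  are functions nat => cfun (only indices < m matter); the algebraic tensor product
  consists of finite formal sums (lists) of elementary tensors.\<close>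

type_synonym etensor = "nat \<Rightarrow> cfun"

fun tin :: "cfun \<Rightarrow> nat \<Rightarrow> etensor \<Rightarrow> etensor \<Rightarrow> cfun" where
  "tin R 0 x y = bm_inner R (x 0) (y 0)"
| "tin R (Suc k) x y = bm_inner R (x (Suc k)) (lact (tin R k x y) (y (Suc k)))"

definition tsums :: "nat \<Rightarrow> etensor list set" where
  "tsums m = {xs. \<forall>x\<in>set xs. \<forall>i<m. x i \<in> CT}"

definition sinner :: "cfun \<Rightarrow> nat \<Rightarrow> etensor list \<Rightarrow> etensor list \<Rightarrow> cfun" where
  "sinner R m xs ys = (\<lambda>w. \<Sum>x\<leftarrow>xs. \<Sum>y\<leftarrow>ys. tin R (m - 1) x y w)"

definition tscale :: "complex \<Rightarrow> etensor list \<Rightarrow> etensor list" where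
  "tscale c xs = map (\<lambda>x. x(0 := (\<lambda>z. c * x 0 z))) xs"

definition tdiff :: "etensor list \<Rightarrow> etensor list \<Rightarrow> etensor list" where
  "tdiff xs ys = xs @ tscale (-1) ys"

definition tlact :: "cfun \<Rightarrow> etensor list \<Rightarrow> etensor list" where
  "tlact a xs = map (\<lambda>x. x(0 := lact a (x 0))) xs"

definition tract :: "cfun \<Rightarrow> nat \<Rightarrow> etensor list \<Rightarrow> cfun \<Rightarrow> etensor list" where
  "tract R m xs b = map (\<lambda>x. x(m - 1 := ract R (x (m - 1)) b)) xs"

text \<open>Completion w.r.t. the norm ||x|| = ||<x,x>||_sup^(1/2): Cauchy sequences of formal
  sums modulo null sequences. (Quotienting the algebraic tensor product over C by the null
  space of the semi-inner product automatically enforces the A-balancing relations.)\<close>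

definition tsmall :: "cfun \<Rightarrow> nat \<Rightarrow> etensor list \<Rightarrow> real \<Rightarrow> bool" where
  "tsmall R m xs e \<longleftrightarrow> (\<forall>w\<in>torus. norm (sinner R m xs xs w) \<le> e)"

definition tcauchy :: "cfun \<Rightarrow> nat \<Rightarrow> (nat \<Rightarrow> etensor list) \<Rightarrow> bool" where
  "tcauchy R m s \<longleftrightarrow> (\<forall>n. s n \<in> tsums m) \<and>
     (\<forall>e>0. \<exists>N. \<forall>n\<ge>N. \<forall>k\<ge>N. tsmall R m (tdiff (s n) (s k)) e)"

definition tequiv :: "cfun \<Rightarrow> nat \<Rightarrow> (nat \<Rightarrow> etensor list) \<Rightarrow> (nat \<Rightarrow> etensor list) \<Rightarrow> bool" where
  "tequiv R m s t \<longleftrightarrow> (\<forall>e>0. \<exists>N. \<forall>n\<ge>N. tsmall R m (tdiff (s n) (t n)) e)"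

definition hbm_iso :: "cfun \<Rightarrow> nat \<Rightarrow> cfun \<Rightarrow> ((nat \<Rightarrow> etensor list) \<Rightarrow> cfun) \<Rightarrow> bool" where
  "hbm_iso R m Q \<Psi> \<longleftrightarrow>
     (\<forall>s. tcauchy R m s \<longrightarrow> \<Psi> s \<in> CT) \<and>
     (\<forall>s t. tcauchy R m s \<longrightarrow> tcauchy R m t \<longrightarrow> (\<Psi> s = \<Psi> t \<longleftrightarrow> tequiv R m s t)) \<and>
     (\<forall>f\<in>CT. \<exists>s. tcauchy R m s \<and> \<Psi> s = f) \<and>
     (\<forall>s t. tcauchy R m s \<longrightarrow> tcauchy R m t \<longrightarrow> \<Psi> (\<lambda>n. s n @ t n) = (\<lambda>z. \<Psi> s z + \<Psi> t z)) \<and>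
     (\<forall>s c. tcauchy R m s \<longrightarrow> \<Psi> (\<lambda>n. tscale c (s n)) = (\<lambda>z. c * \<Psi> s z)) \<and>
     (\<forall>s t. tcauchy R m s \<longrightarrow> tcauchy R m t \<longrightarrow>
        (\<forall>e>0. \<exists>N. \<forall>n\<ge>N. \<forall>w\<in>torus.
           norm (sinner R m (s n) (t n) w - bm_inner Q (\<Psi> s) (\<Psi> t) w) \<le> e)) \<and>
     (\<forall>s a. tcauchy R m s \<longrightarrow> a \<in> CT \<longrightarrow> \<Psi> (\<lambda>n. tlact a (s n)) = lact a (\<Psi> s)) \<and>
     (\<forall>s b. tcauchy R m s \<longrightarrow> b \<in> CT \<longrightarrow> \<Psi> (\<lambda>n. tract R m (s n) b) = ract Q (\<Psi> s) b)"

end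

theory Submission
  imports Defs "HOL-Computational_Algebra.Polynomial" "HOL-Complex_Analysis.Complex_Analysis"
begin



definition bfac :: "complex \<Rightarrow> complex \<Rightarrow> complex" where
  "bfac a z = (z - a) / (1 - cnj a * z)"

lemma torus_iff: "z \<in> torus \<longleftrightarrow> norm z = 1"
  by (simp add: torus_def)

lemma denom_torus:
  assumes "norm z = 1" "norm a < 1"
  shows "1 - cnj a * z = z * cnj (z - a)" "norm (1 - cnj a * z) = norm (z - a)" "z - a \<noteq> 0"
proof -
  have zz: "z * cnj z = 1" using assms(1)
    by (metis complex_norm_square of_real_1 power_one)
  show 1: "1 - cnj a * z = z * cnj (z - a)" using zz by (simp add: algebra_simps)
  show "norm (1 - cnj a * z) = norm (z - a)" unfolding 1 using assms(1)
    by (simp add: norm_mult del: complex_cnj_diff)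
  show "z - a \<noteq> 0" using assms by auto
qed

lemma bfac_deriv:
  assumes "norm z = 1" "norm a < 1"
  shows "(bfac a has_field_derivative (1 - cnj a * a) / (1 - cnj a * z)^2) (at z)"
proof -
  have nz: "1 - cnj a * z \<noteq> 0" using denom_torus[OF assms] by auto
  show ?thesis unfolding bfac_def[abs_def]
    using nz by (auto intro!: derivative_eq_intros simp: field_simps power2_eq_square)
qed

lemma bfac_log_deriv:
  assumes "norm z = 1" "norm a < 1"
  shows "z * ((1 - cnj a * a) / (1 - cnj a * z)^2) =
     of_real ((1 - norm a ^ 2) / norm (z - a) ^ 2) * bfac a z"
proof -
  note d = denom_torus[OF assms]
  define c where "c = 1 - cnj a * z"
  define k where "k = norm (z - a) ^ 2"
  define t where "t = 1 - norm a ^ 2"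
  have n1: "of_real k = (z - a) * cnj (z - a)" unfolding k_def by (rule complex_norm_square)
  have n2: "1 - cnj a * a = of_real t" unfolding t_def
    using complex_norm_square[of a] by (simp add: mult.commute)
  have e1: "(z - a) * c = z * of_real k" unfolding c_def d(1) n1 by (simp add: algebra_simps)
  have cnz: "c \<noteq> 0" unfolding c_def d(1) using d(3) assms(1) by auto
  have knz: "k \<noteq> 0" unfolding k_def using d(3) by simp
  have "of_real (t / k) * bfac a z = of_real t * ((z - a) * c) / (of_real k * c^2)"
    unfolding bfac_def c_def[symmetric] using cnz knz by (simp add: field_simps power2_eq_square)
  also have "\<dots> = z * (of_real t / c^2)" unfolding e1 using cnz knz by (simp add: field_simps)
  finally show ?thesis unfolding n2 c_def[symmetric] k_def[symmetric] t_def[symmetric] by simp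
qed




definition bprod :: "complex list \<Rightarrow> complex \<Rightarrow> complex" where
  "bprod zs z = (\<Prod>a\<leftarrow>zs. (z - a) / (1 - cnj a * z))"

lemma bprod_Nil: "bprod [] = (\<lambda>z. 1)" by (simp add: bprod_def fun_eq_iff)
lemma bprod_Cons: "bprod (a # zs) = (\<lambda>z. bfac a z * bprod zs z)"
  by (simp add: bprod_def bfac_def fun_eq_iff)

lemma bfac_norm: "norm z = 1 \<Longrightarrow> norm a < 1 \<Longrightarrow> norm (bfac a z) = 1"
  using denom_torus[of z a] by (simp add: bfac_def norm_divide)

lemma bprod_ind:
  assumes "norm z = 1" "\<forall>a\<in>set zs. norm a < 1"
  shows "\<exists>D r. (bprod zs has_field_derivative D) (at z) \<and> norm (bprod zs z) = 1 \<and>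
     z * D = of_real r * bprod zs z \<and> r \<ge> 0 \<and> (zs \<noteq> [] \<longrightarrow> r > 0)"
  using assms(2)
proof (induction zs)
  case Nil
  show ?case by (rule exI[of _ 0], rule exI[of _ 0]) (auto simp: bprod_Nil)
next
  case (Cons a zs)
  then obtain D r where D: "(bprod zs has_field_derivative D) (at z)" "norm (bprod zs z) = 1"
     "z * D = of_real r * bprod zs z" "r \<ge> 0" by auto
  have a: "norm a < 1" using Cons.prems by auto
  define s where "s = (1 - norm a ^ 2) / norm (z - a) ^ 2"
  have spos: "s > 0" unfolding s_def using a denom_torus(3)[OF assms(1) a]
    by (simp add: abs_square_less_1)
  define b' where "b' = (1 - cnj a * a) / (1 - cnj a * z)^2"
  have bd: "(bfac a has_field_derivative b') (at z)" unfolding b'_def by (rule bfac_deriv[OF assms(1) a])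
  have bl: "z * b' = of_real s * bfac a z" unfolding b'_def s_def by (rule bfac_log_deriv[OF assms(1) a])
  have "(bprod (a # zs) has_field_derivative (b' * bprod zs z + bfac a z * D)) (at z)"
    unfolding bprod_Cons using DERIV_mult[OF bd D(1)] by (simp add: mult.commute)
  moreover have "norm (bprod (a # zs) z) = 1"
    unfolding bprod_Cons using bfac_norm[OF assms(1) a] D(2) by (simp add: norm_mult)
  moreover have "z * (b' * bprod zs z + bfac a z * D) = of_real (s + r) * bprod (a # zs) z"
  proof -
    have "z * (b' * bprod zs z + bfac a z * D) = (z * b') * bprod zs z + bfac a z * (z * D)"
      by (simp add: algebra_simps)
    also have "\<dots> = of_real (s + r) * (bfac a z * bprod zs z)" unfolding bl D(3)
      by (simp add: algebra_simps)
    finally show ?thesis unfolding bprod_Cons by simp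
  qed
  ultimately show ?case using spos D(4) by (intro exI[of _ "s + r"] exI) auto
qed

lemma bprod_holo:
  "bprod zs holomorphic_on {z. \<forall>a\<in>set zs. cnj a * z \<noteq> 1}"
proof (induction zs)
  case Nil then show ?case by (simp add: bprod_Nil)
next
  case (Cons a zs)
  have "bprod zs holomorphic_on {z. \<forall>a\<in>set (a#zs). cnj a * z \<noteq> 1}"
    by (rule holomorphic_on_subset[OF Cons]) auto
  moreover have "bfac a holomorphic_on {z. \<forall>a\<in>set (a#zs). cnj a * z \<noteq> 1}"
    unfolding bfac_def[abs_def] by (intro holomorphic_intros) auto
  ultimately show ?case unfolding bprod_Cons by (intro holomorphic_intros)
qed

lemma open_dom: "open {z::complex. \<forall>a\<in>set zs. cnj a * z \<noteq> 1}"
proof -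
  have "{z::complex. \<forall>a\<in>set zs. cnj a * z \<noteq> 1} = (\<Inter>a\<in>set zs. {z. cnj a * z \<noteq> 1})" by auto
  moreover have "open {z::complex. cnj a * z \<noteq> 1}" for a
    by (intro open_Collect_neq continuous_intros)
  ultimately show ?thesis by auto
qed




lemma poly_pl: "poly (\<Prod>a\<leftarrow>zs. f a) z = (\<Prod>a\<leftarrow>zs. poly (f a) z)"
  by (induction zs) auto

lemma degree_pl: "degree (\<Prod>a\<leftarrow>zs. [:c a, d a:]) \<le> length zs"
proof (induction zs)
  case Nil then show ?case by simp
next
  case (Cons a zs)
  have "degree ([:c a, d a:] * (\<Prod>a\<leftarrow>zs. [:c a, d a:])) \<le> degree [:c a, d a:] + degree (\<Prod>a\<leftarrow>zs. [:c a, d a:])"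
    by (rule degree_mult_le)
  moreover have "degree [:c a, d a:] \<le> 1" by simp
  ultimately show ?case using Cons by simp
qed

lemma bprod_clear:
  assumes "\<forall>a\<in>set zs. cnj a * z \<noteq> 1"
  shows "bprod zs z * (\<Prod>a\<leftarrow>zs. 1 - cnj a * z) = (\<Prod>a\<leftarrow>zs. z - a)"
  using assms
proof (induction zs)
  case Nil then show ?case by (simp add: bprod_Nil)
next
  case (Cons a zs)
  have nz: "1 - cnj a * z \<noteq> 0" using Cons.prems by auto
  have "bprod (a#zs) z * (\<Prod>a\<leftarrow>a#zs. 1 - cnj a * z) =
     (bfac a z * (1 - cnj a * z)) * (bprod zs z * (\<Prod>a\<leftarrow>zs. 1 - cnj a * z))"
    by (simp add: bprod_Cons algebra_simps)
  also have "\<dots> = (z - a) * (\<Prod>a\<leftarrow>zs. z - a)" using Cons nz by (simp add: bfac_def)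
  finally show ?case by simp
qed

lemma blaschke_fibers:
  assumes "zs \<noteq> []" "\<forall>a\<in>set zs. norm a < 1" "norm lam = 1"
  shows "finite {z\<in>torus. lam * bprod zs z = w} \<and> card {z\<in>torus. lam * bprod zs z = w} \<le> length zs"
proof (cases "w \<in> torus")
  case False
  have "{z\<in>torus. lam * bprod zs z = w} = {}"
  proof safe
    fix z assume "z \<in> torus" "w = lam * bprod zs z"
    then have "norm w = 1" using bprod_ind[of z zs] assms by (auto simp: torus_iff norm_mult)
    then show "z \<in> {}" using False by (simp add: torus_iff)
  qed
  then show ?thesis by (simp only: finite.emptyI card.empty) simp
next
  case True
  then have w0: "w \<noteq> 0" by (auto simp: torus_iff)
  define p where "p = smult lam (\<Prod>a\<leftarrow>zs. [:-a, 1:]) - smult w (\<Prod>a\<leftarrow>zs. [:1, -cnj a:])"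
  have pz: "poly p z = lam * (\<Prod>a\<leftarrow>zs. z - a) - w * (\<Prod>a\<leftarrow>zs. 1 - cnj a * z)" for z
    unfolding p_def by (simp add: poly_pl algebra_simps)
  obtain a1 where a1: "a1 \<in> set zs" using assms(1) by (cases zs) auto
  have "(\<Prod>a\<leftarrow>zs. a1 - a) = 0" using a1 by (simp add: prod_list_zero_iff)
  moreover have "(\<Prod>a\<leftarrow>zs. 1 - cnj a * a1) \<noteq> 0"
  proof -
    have "1 - cnj a * a1 \<noteq> 0" if "a \<in> set zs" for a
    proof
      assume "1 - cnj a * a1 = 0"
      then have "norm (cnj a * a1) = 1" by (metis eq_iff_diff_eq_0 norm_one)
      moreover have "norm (cnj a * a1) < 1" using assms(2) a1 that
        using mult_strict_mono[of "norm a" 1 "norm a1" 1] by (simp add: norm_mult)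
      ultimately show False by simp
    qed
    then show ?thesis by (auto simp: prod_list_zero_iff)
  qed
  ultimately have "poly p a1 \<noteq> 0" using w0 by (simp add: pz)
  then have p0: "p \<noteq> 0" by auto
  have dp: "degree p \<le> length zs"
  proof -
    have "degree p \<le> max (degree (smult lam (\<Prod>a\<leftarrow>zs. [:-a, 1:]))) (degree (smult w (\<Prod>a\<leftarrow>zs. [:1, -cnj a:])))"
      unfolding p_def by (rule degree_diff_le_max)
    moreover have "degree (smult lam (\<Prod>a\<leftarrow>zs. [:-a, 1:])) \<le> length zs"
      using degree_pl[of "\<lambda>a. -a" "\<lambda>a. 1" zs] degree_smult_le order_trans by blast
    moreover have "degree (smult w (\<Prod>a\<leftarrow>zs. [:1, -cnj a:])) \<le> length zs"
      using degree_pl[of "\<lambda>a. 1" "\<lambda>a. -cnj a" zs] degree_smult_le order_trans by blast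
    ultimately show ?thesis by simp
  qed
  have sub: "{z\<in>torus. lam * bprod zs z = w} \<subseteq> {z. poly p z = 0}"
  proof safe
    fix z assume z: "z \<in> torus" and e: "w = lam * bprod zs z"
    have dn: "\<forall>a\<in>set zs. cnj a * z \<noteq> 1"
    proof
      fix a assume "a \<in> set zs"
      then have "norm (cnj a * z) < 1" using assms(2) z by (simp add: torus_iff norm_mult)
      then show "cnj a * z \<noteq> 1" by auto
    qed
    show "poly p z = 0" unfolding pz e
      using bprod_clear[OF dn] by (simp add: algebra_simps)
  qed
  have fin: "finite {z. poly p z = 0}" by (rule poly_roots_finite[OF p0])
  have "card {z\<in>torus. lam * bprod zs z = w} \<le> card {z. poly p z = 0}" by (rule card_mono[OF fin sub])
  also have "\<dots> \<le> degree p" by (rule card_poly_roots_bound[OF p0])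
  finally show ?thesis using finite_subset[OF sub fin] dp by simp
qed




definition fib :: "cfun \<Rightarrow> complex \<Rightarrow> complex set" where
  "fib Q w = {z\<in>torus. Q z = w}"

definition good :: "cfun \<Rightarrow> bool" where
  "good Q \<longleftrightarrow> (\<forall>z\<in>torus. Q z \<in> torus) \<and> (\<forall>z\<in>torus. Q field_differentiable at z) \<and>
     (\<exists>d B. 0 < d \<and> (\<forall>z\<in>torus. d \<le> norm (deriv Q z) \<and> norm (deriv Q z) \<le> B)) \<and>
     (\<exists>N. \<forall>w. finite (fib Q w) \<and> card (fib Q w) \<le> N)"

lemma one_torus: "1 \<in> torus" by (simp add: torus_iff)

lemma blaschke_good:
  assumes "fin_blaschke R"
  shows "good R"
proof -
  obtain lam zs where zs: "zs \<noteq> []" "norm lam = 1" "\<forall>a\<in>set zs. norm a < 1"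
    and R: "R = (\<lambda>z. lam * bprod zs z)"
    using assms unfolding fin_blaschke_def bprod_def by blast
  have bn: "norm (bprod zs z) = 1" if "z \<in> torus" for z
    using bprod_ind[of z zs] zs that by (auto simp: torus_iff)
  have tor: "\<forall>z\<in>torus. R z \<in> torus"
    using bn zs unfolding R by (auto simp: torus_iff norm_mult)
  have dR: "\<exists>D. (R has_field_derivative D) (at z) \<and> D \<noteq> 0" if z: "z \<in> torus" for z
  proof -
    obtain D r where D: "(bprod zs has_field_derivative D) (at z)" "norm (bprod zs z) = 1"
      "z * D = of_real r * bprod zs z" "r > 0"
      using bprod_ind[of z zs] zs z by (auto simp: torus_iff)
    have "D \<noteq> 0" using D(2,3,4) by auto
    then show ?thesis unfolding R using zs(2)
      by (intro exI[of _ "lam * D"]) (auto intro!: DERIV_cmult D(1))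
  qed
  have diff: "\<forall>z\<in>torus. R field_differentiable at z"
    using dR field_differentiable_def by blast
  have dnz: "\<forall>z\<in>torus. deriv R z \<noteq> 0"
    using dR DERIV_imp_deriv by metis
  define S where "S = {z::complex. \<forall>a\<in>set zs. cnj a * z \<noteq> 1}"
  have oS: "open S" unfolding S_def by (rule open_dom)
  have hS: "R holomorphic_on S" unfolding R S_def by (intro holomorphic_intros bprod_holo)
  have tS: "torus \<subseteq> S"
  proof
    fix z assume "z \<in> torus"
    then have "norm (cnj a * z) < 1" if "a \<in> set zs" for a using zs(3) that by (simp add: torus_iff norm_mult)
    then show "z \<in> S" unfolding S_def by fastforce
  qed
  have cont: "continuous_on torus (\<lambda>z. norm (deriv R z))"
    by (intro continuous_intros continuous_on_subset[OF holomorphic_on_imp_continuous_on[OF holomorphic_deriv[OF hS oS]] tS])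
  have ct: "compact torus" "torus \<noteq> {}" using one_torus by (auto simp: torus_def)
  obtain z0 where z0: "z0 \<in> torus" "\<forall>y\<in>torus. norm (deriv R z0) \<le> norm (deriv R y)"
    using continuous_attains_inf[OF ct cont] by blast
  obtain z1 where z1: "\<forall>y\<in>torus. norm (deriv R y) \<le> norm (deriv R z1)"
    using continuous_attains_sup[OF ct cont] by blast
  have bnd: "\<exists>d B. 0 < d \<and> (\<forall>z\<in>torus. d \<le> norm (deriv R z) \<and> norm (deriv R z) \<le> B)"
    using z0 z1 dnz by (intro exI[of _ "norm (deriv R z0)"] exI[of _ "norm (deriv R z1)"]) auto
  have fb: "\<exists>N. \<forall>w. finite (fib R w) \<and> card (fib R w) \<le> N"
    unfolding fib_def R using blaschke_fibers[OF zs(1,3,2)] by blast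
  show ?thesis unfolding good_def using tor diff bnd fb by blast
qed




lemma good_id: "good id"
proof -
  have "fib id w \<subseteq> {w}" for w by (auto simp: fib_def)
  then have "finite (fib id w) \<and> card (fib id w) \<le> 1" for w
    using finite_subset[of "fib id w" "{w}"] card_mono[of "{w}" "fib id w"] by auto
  then show ?thesis unfolding good_def
    by (auto intro!: exI[of _ 1] field_differentiable_ident simp: id_def[symmetric])
qed

lemma good_torus: "good Q \<Longrightarrow> z \<in> torus \<Longrightarrow> Q z \<in> torus" by (simp add: good_def)
lemma good_diff: "good Q \<Longrightarrow> z \<in> torus \<Longrightarrow> Q field_differentiable at z" by (simp add: good_def)

lemma good_cont: "good Q \<Longrightarrow> continuous_on torus Q"
  by (meson continuous_at_imp_continuous_on field_differentiable_imp_continuous_at good_diff)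

lemma good_comp:
  assumes R: "good R" and Q: "good Q"
  shows "good (R \<circ> Q)"
proof -
  have tor: "\<forall>z\<in>torus. (R \<circ> Q) z \<in> torus" using R Q by (simp add: good_torus)
  have diff: "\<forall>z\<in>torus. (R \<circ> Q) field_differentiable at z"
    using R Q by (simp add: good_torus good_diff field_differentiable_compose)
  have dch: "deriv (R \<circ> Q) z = deriv R (Q z) * deriv Q z" if "z \<in> torus" for z
    using R Q that by (simp add: good_torus good_diff deriv_chain)
  obtain d1 B1 where b1: "0 < d1" "\<forall>z\<in>torus. d1 \<le> norm (deriv R z) \<and> norm (deriv R z) \<le> B1"
    using R unfolding good_def by blast
  obtain d2 B2 where b2: "0 < d2" "\<forall>z\<in>torus. d2 \<le> norm (deriv Q z) \<and> norm (deriv Q z) \<le> B2"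
    using Q unfolding good_def by blast
  have bnd: "\<forall>z\<in>torus. d1 * d2 \<le> norm (deriv (R \<circ> Q) z) \<and> norm (deriv (R \<circ> Q) z) \<le> B1 * B2"
  proof
    fix z assume z: "z \<in> torus"
    have q: "Q z \<in> torus" using Q z by (simp add: good_torus)
    have i1: "d1 \<le> norm (deriv R (Q z))" "norm (deriv R (Q z)) \<le> B1" using b1 q by auto
    have i2: "d2 \<le> norm (deriv Q z)" "norm (deriv Q z) \<le> B2" using b2 z by auto
    show "d1 * d2 \<le> norm (deriv (R \<circ> Q) z) \<and> norm (deriv (R \<circ> Q) z) \<le> B1 * B2"
      unfolding dch[OF z] norm_mult using i1 i2 b1(1) b2(1)
      by (auto intro!: mult_mono)
  qed
  obtain N1 where n1: "\<forall>w. finite (fib R w) \<and> card (fib R w) \<le> N1" using R unfolding good_def by blast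
  obtain N2 where n2: "\<forall>w. finite (fib Q w) \<and> card (fib Q w) \<le> N2" using Q unfolding good_def by blast
  have fb: "finite (fib (R \<circ> Q) w) \<and> card (fib (R \<circ> Q) w) \<le> N1 * N2" for w
  proof -
    have sub: "fib (R \<circ> Q) w \<subseteq> (\<Union>y\<in>fib R w. fib Q y)"
      using Q by (auto simp: fib_def good_torus)
    have fin: "finite (\<Union>y\<in>fib R w. fib Q y)" using n1 n2 by auto
    have "card (fib (R \<circ> Q) w) \<le> card (\<Union>y\<in>fib R w. fib Q y)" by (rule card_mono[OF fin sub])
    also have "\<dots> \<le> (\<Sum>y\<in>fib R w. card (fib Q y))" using n1 by (intro card_UN_le) auto
    also have "\<dots> \<le> (\<Sum>y\<in>fib R w. N2)" using n2 by (intro sum_mono) auto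
    also have "\<dots> = card (fib R w) * N2" by simp
    also have "\<dots> \<le> N1 * N2" using n1 by simp
    finally show ?thesis using finite_subset[OF sub fin] by simp
  qed
  show ?thesis unfolding good_def
  proof (intro conjI)
    show "\<exists>d B. 0 < d \<and> (\<forall>z\<in>torus. d \<le> norm (deriv (R \<circ> Q) z) \<and> norm (deriv (R \<circ> Q) z) \<le> B)"
      using bnd mult_pos_pos[OF b1(1) b2(1)] by blast
    show "\<exists>N. \<forall>w. finite (fib (R \<circ> Q) w) \<and> card (fib (R \<circ> Q) w) \<le> N" using fb by blast
  qed (use tor diff in auto)
qed

lemma good_pow: "good R \<Longrightarrow> good (R ^^ k)"
  by (induction k) (auto simp: good_id good_comp)




definition Pk :: "cfun \<Rightarrow> nat \<Rightarrow> etensor \<Rightarrow> cfun" where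
  "Pk R k x = (\<lambda>z. \<Prod>i<Suc k. x i ((R ^^ i) z))"

lemma Pk_Suc: "Pk R (Suc k) x z = Pk R k x z * x (Suc k) ((R ^^ Suc k) z)"
  unfolding Pk_def by (simp only: prod.lessThan_Suc)

lemma bm_inner_in: "w \<in> torus \<Longrightarrow> bm_inner Q f g w =
  (\<Sum>z\<in>fib Q w. cnj (f z) * g z / complex_of_real (norm (deriv Q z)))"
  by (simp add: bm_inner_def fib_def)

lemma bm_inner_out: "w \<notin> torus \<Longrightarrow> bm_inner Q f g w = 0"
  by (simp add: bm_inner_def)

lemma tin_eq:
  assumes R: "good R"
  shows "tin R k x y w = bm_inner (R ^^ Suc k) (Pk R k x) (Pk R k y) w"
proof (induction k arbitrary: w)
  case 0
  have "Pk R 0 x = x 0" "Pk R 0 y = y 0" by (simp_all add: Pk_def fun_eq_iff)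
  then show ?case by simp
next
  case (Suc k)
  define Q where "Q = R ^^ Suc k"
  have gQ: "good Q" unfolding Q_def using good_pow[OF R] .
  have RQ: "R ^^ Suc (Suc k) = R \<circ> Q" unfolding Q_def by simp
  show ?case
  proof (cases "w \<in> torus")
    case False
    then show ?thesis by (simp add: bm_inner_out)
  next
    case w: True
    define g where "g u = cnj (Pk R k x u * x (Suc k) (Q u)) * (Pk R k y u * y (Suc k) (Q u)) /
       (complex_of_real (norm (deriv R (Q u))) * complex_of_real (norm (deriv Q u)))" for u
    have fR: "finite (fib R w)" using R unfolding good_def by blast
    have fRQ: "finite (fib (R \<circ> Q) w)" using good_comp[OF R gQ] unfolding good_def by blast
    have "tin R (Suc k) x y w =
      (\<Sum>z\<in>fib R w. cnj (x (Suc k) z) * (tin R k x y z * y (Suc k) z) / complex_of_real (norm (deriv R z)))"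
      using w by (simp add: bm_inner_in lact_def)
    also have "\<dots> = (\<Sum>z\<in>fib R w. \<Sum>u\<in>fib Q z. g u)"
    proof (rule sum.cong[OF refl])
      fix z assume z: "z \<in> fib R w"
      then have zt: "z \<in> torus" by (simp add: fib_def)
      have "cnj (x (Suc k) z) * (tin R k x y z * y (Suc k) z) / complex_of_real (norm (deriv R z))
        = (\<Sum>u\<in>fib Q z. cnj (x (Suc k) z) * ((cnj (Pk R k x u) * Pk R k y u / complex_of_real (norm (deriv Q u))) * y (Suc k) z) / complex_of_real (norm (deriv R z)))"
        unfolding Suc.IH bm_inner_in[OF zt] Q_def[symmetric]
        by (simp add: sum_distrib_left sum_distrib_right sum_divide_distrib)
      also have "\<dots> = (\<Sum>u\<in>fib Q z. g u)"
        by (rule sum.cong[OF refl]) (auto simp: g_def fib_def field_simps)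
      finally show "cnj (x (Suc k) z) * (tin R k x y z * y (Suc k) z) / complex_of_real (norm (deriv R z)) = (\<Sum>u\<in>fib Q z. g u)" .
    qed
    also have "\<dots> = (\<Sum>z\<in>fib R w. sum g {u. u \<in> fib (R \<circ> Q) w \<and> Q u = z})"
    proof (rule sum.cong[OF refl])
      fix z assume "z \<in> fib R w"
      then have "fib Q z = {u. u \<in> fib (R \<circ> Q) w \<and> Q u = z}" by (auto simp: fib_def)
      then show "sum g (fib Q z) = sum g {u. u \<in> fib (R \<circ> Q) w \<and> Q u = z}" by simp
    qed
    also have "\<dots> = sum g (fib (R \<circ> Q) w)"
      by (rule sum.group[OF fRQ fR]) (use gQ in \<open>auto simp: fib_def good_torus\<close>)
    also have "\<dots> = bm_inner (R ^^ Suc (Suc k)) (Pk R (Suc k) x) (Pk R (Suc k) y) w"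
      unfolding RQ bm_inner_in[OF w]
    proof (rule sum.cong[OF refl])
      fix u assume "u \<in> fib (R \<circ> Q) w"
      then have u: "u \<in> torus" by (simp add: fib_def)
      have "deriv (R \<circ> Q) u = deriv R (Q u) * deriv Q u"
        using R gQ u by (simp add: good_torus good_diff deriv_chain)
      then show "g u = cnj (Pk R (Suc k) x u) * Pk R (Suc k) y u / complex_of_real (norm (deriv (R \<circ> Q) u))"
        unfolding g_def Pk_Suc Q_def by (simp add: norm_mult)
    qed
    finally show ?thesis .
  qed
qed




definition Psi0 :: "cfun \<Rightarrow> nat \<Rightarrow> etensor list \<Rightarrow> cfun" where
  "Psi0 R m xs = (\<lambda>z. \<Sum>x\<leftarrow>xs. Pk R (m - 1) x z)"

lemma bi_sumL: "bm_inner Q (\<lambda>z. \<Sum>x\<leftarrow>xs. f x z) h w = (\<Sum>x\<leftarrow>xs. bm_inner Q (f x) h w)"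
proof (induction xs)
  case Nil then show ?case by (simp add: bm_inner_def)
next
  case (Cons a xs)
  have "bm_inner Q (\<lambda>z. \<Sum>x\<leftarrow>a#xs. f x z) h w = bm_inner Q (f a) h w + bm_inner Q (\<lambda>z. \<Sum>x\<leftarrow>xs. f x z) h w"
    by (simp add: bm_inner_def sum.distrib[symmetric] ring_distribs add_divide_distrib)
  then show ?case using Cons by simp
qed

lemma bi_sumR: "bm_inner Q h (\<lambda>z. \<Sum>x\<leftarrow>xs. f x z) w = (\<Sum>x\<leftarrow>xs. bm_inner Q h (f x) w)"
proof (induction xs)
  case Nil then show ?case by (simp add: bm_inner_def)
next
  case (Cons a xs)
  have "bm_inner Q h (\<lambda>z. \<Sum>x\<leftarrow>a#xs. f x z) w = bm_inner Q h (f a) w + bm_inner Q h (\<lambda>z. \<Sum>x\<leftarrow>xs. f x z) w"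
    by (simp add: bm_inner_def sum.distrib[symmetric] ring_distribs add_divide_distrib)
  then show ?case using Cons by simp
qed

lemma sinner_eq:
  assumes "good R" "m \<ge> 1"
  shows "sinner R m xs ys w = bm_inner (R ^^ m) (Psi0 R m xs) (Psi0 R m ys) w"
proof -
  have m: "Suc (m - 1) = m" using assms(2) by simp
  show ?thesis unfolding sinner_def Psi0_def bi_sumL bi_sumR tin_eq[OF assms(1)] m ..
qed




lemma Pk_upd0: "Pk R k (x(0 := f)) z = f z * (\<Prod>i<k. x (Suc i) ((R ^^ Suc i) z))"
  unfolding Pk_def by (simp only: prod.lessThan_Suc_shift) simp

lemma Pk_0: "Pk R k x z = x 0 z * (\<Prod>i<k. x (Suc i) ((R ^^ Suc i) z))"
  unfolding Pk_def by (simp only: prod.lessThan_Suc_shift) simp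

lemma Pk_updk: "Pk R k (x(k := f)) z = (\<Prod>i<k. x i ((R ^^ i) z)) * f ((R ^^ k) z)"
proof -
  have "(\<Prod>i<k. (x(k := f)) i ((R ^^ i) z)) = (\<Prod>i<k. x i ((R ^^ i) z))"
    by (rule prod.cong) auto
  then show ?thesis unfolding Pk_def by (simp only: prod.lessThan_Suc) simp
qed

lemma Pk_k: "Pk R k x z = (\<Prod>i<k. x i ((R ^^ i) z)) * x k ((R ^^ k) z)"
  unfolding Pk_def by (simp only: prod.lessThan_Suc)

lemma Psi0_append: "Psi0 R m (xs @ ys) z = Psi0 R m xs z + Psi0 R m ys z"
  by (simp add: Psi0_def)

lemma Psi0_tscale: "Psi0 R m (tscale c xs) z = c * Psi0 R m xs z"
  by (induction xs) (auto simp: Psi0_def tscale_def Pk_upd0 Pk_0 algebra_simps)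

lemma Psi0_tdiff: "Psi0 R m (tdiff xs ys) z = Psi0 R m xs z - Psi0 R m ys z"
  by (simp add: tdiff_def Psi0_append Psi0_tscale)

lemma Psi0_tlact: "Psi0 R m (tlact a xs) z = a z * Psi0 R m xs z"
  by (induction xs) (auto simp: Psi0_def tlact_def lact_def Pk_upd0 Pk_0 algebra_simps)

lemma Pk_ract: "Pk R k (x(k := ract R (x k) b)) z = Pk R k x z * b ((R ^^ Suc k) z)"
  unfolding Pk_updk Pk_k ract_def by simp

lemma Psi0_tract: "m \<ge> 1 \<Longrightarrow> Psi0 R m (tract R m xs b) z = Psi0 R m xs z * b ((R ^^ m) z)"
proof (induction xs)
  case Nil then show ?case by (simp add: Psi0_def tract_def)
next
  case (Cons x xs)
  have m: "Suc (m - 1) = m" using Cons.prems by simp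
  have "Pk R (m - 1) (x(m - 1 := ract R (x (m - 1)) b)) z = Pk R (m - 1) x z * b ((R ^^ m) z)"
    using Pk_ract[of R "m - 1" x b z] unfolding m .
  then show ?case using Cons by (simp add: Psi0_def tract_def algebra_simps)
qed

lemma Psi0_single: "m \<ge> 1 \<Longrightarrow> Psi0 R m [x] z = (\<Prod>i<m. x i ((R ^^ i) z))"
  by (simp add: Psi0_def Pk_def)

lemma cont_sumlist: "(\<And>x. x \<in> set xs \<Longrightarrow> continuous_on S (f x)) \<Longrightarrow>
  continuous_on S (\<lambda>z. \<Sum>x\<leftarrow>xs. f x z :: complex)"
proof (induction xs)
  case Nil then show ?case by simp
next
  case (Cons a xs)
  have "continuous_on S (\<lambda>z. f a z + (\<Sum>x\<leftarrow>xs. f x z))" using Cons by (intro continuous_on_add) auto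
  then show ?case by simp
qed



lemma Psi0_cont:
  assumes "good R" "xs \<in> tsums m" "m \<ge> 1"
  shows "continuous_on torus (Psi0 R m xs)"
proof -
  have "continuous_on torus (Pk R k x)" if "x \<in> set xs" "k < m" for x k
  proof -
    have "continuous_on torus (\<lambda>z. x i ((R ^^ i) z))" if "i < Suc k" for i
    proof -
      have im: "i < m" using \<open>k < m\<close> that by simp
      have "x i \<in> CT" using assms(2) \<open>x \<in> set xs\<close> im unfolding tsums_def by blast
      then have c: "continuous_on torus (x i)" by (simp add: CT_def)
      have g: "good (R ^^ i)" by (rule good_pow[OF assms(1)])
      show ?thesis
        by (rule continuous_on_compose2[OF c good_cont[OF g]]) (auto intro: good_torus[OF g])
    qed
    then show ?thesis unfolding Pk_def by (intro continuous_on_prod) simp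
  qed
  then have "\<And>x. x \<in> set xs \<Longrightarrow> continuous_on torus (Pk R (m - 1) x)" using assms(3) by (metis diff_less zero_less_one order.strict_trans2)
  then show ?thesis unfolding Psi0_def by (rule cont_sumlist)
qed




lemma bm_inner_self:
  assumes "w \<in> torus"
  shows "bm_inner Q f f w = of_real (\<Sum>u\<in>fib Q w. norm (f u)^2 / norm (deriv Q u))"
proof -
  have tm: "cnj (f u) * f u / complex_of_real (norm (deriv Q u)) = of_real (norm (f u)^2 / norm (deriv Q u))" for u
    by (simp only: of_real_divide complex_norm_square mult.commute)
  show ?thesis unfolding bm_inner_in[OF assms] of_real_sum by (rule sum.cong[OF refl]) (rule tm)
qed

lemma LemA:
  assumes "good Q"
  shows "\<exists>B>0. \<forall>f z. z \<in> torus \<longrightarrow> norm (f z)^2 \<le> B * norm (bm_inner Q f f (Q z))"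
proof -
  obtain d B where b: "0 < d" "\<forall>z\<in>torus. d \<le> norm (deriv Q z) \<and> norm (deriv Q z) \<le> B"
    using assms unfolding good_def by blast
  obtain N where n: "\<forall>w. finite (fib Q w) \<and> card (fib Q w) \<le> N" using assms unfolding good_def by blast
  have Bp: "B > 0" using b one_torus by force
  have "norm (f z)^2 \<le> B * norm (bm_inner Q f f (Q z))" if z: "z \<in> torus" for f z
  proof -
    have w: "Q z \<in> torus" using assms z by (simp add: good_torus)
    have zf: "z \<in> fib Q (Q z)" using z by (simp add: fib_def)
    have dz: "d \<le> norm (deriv Q z)" "norm (deriv Q z) \<le> B" using b z by auto
    have pos: "norm (deriv Q u) > 0" if "u \<in> fib Q (Q z)" for u
      using b that \<open>0 < d\<close> by (force simp: fib_def)
    let ?s = "\<Sum>u\<in>fib Q (Q z). norm (f u)^2 / norm (deriv Q u)"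
    have nn: "0 \<le> ?s" by (intro sum_nonneg) auto
    have le: "norm (f z)^2 / norm (deriv Q z) \<le> ?s"
      by (rule member_le_sum[OF zf]) (use n in auto)
    have "norm (f z)^2 = norm (deriv Q z) * (norm (f z)^2 / norm (deriv Q z))"
      using pos[OF zf] by simp
    also have "\<dots> \<le> B * ?s"
      by (rule mult_mono) (use dz le nn Bp in auto)
    also have "\<dots> = B * norm (bm_inner Q f f (Q z))"
      unfolding bm_inner_self[OF w] norm_of_real abs_of_nonneg[OF nn] ..
    finally show ?thesis .
  qed
  then show ?thesis using Bp by blast
qed

lemma LemA':
  assumes "good Q" "\<epsilon> > 0"
  shows "\<exists>e>0. \<forall>f z. z \<in> torus \<longrightarrow> (\<forall>w\<in>torus. norm (bm_inner Q f f w) \<le> e) \<longrightarrow> norm (f z) < \<epsilon>"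
proof -
  obtain B where B: "B > 0" "\<forall>f z. z \<in> torus \<longrightarrow> norm (f z)^2 \<le> B * norm (bm_inner Q f f (Q z))"
    using LemA[OF assms(1)] by blast
  define e where "e = \<epsilon>^2 / (2 * B)"
  have ep: "e > 0" unfolding e_def using B(1) assms(2) by simp
  have "norm (f z) < \<epsilon>" if z: "z \<in> torus" and sm: "\<forall>w\<in>torus. norm (bm_inner Q f f w) \<le> e" for f z
  proof -
    have "norm (f z)^2 \<le> B * norm (bm_inner Q f f (Q z))" using B(2) z by blast
    also have "\<dots> \<le> B * e" using sm good_torus[OF assms(1) z] B(1) by (intro mult_left_mono) auto
    also have "\<dots> = \<epsilon>^2 / 2" unfolding e_def using B(1) by simp
    also have "\<dots> < \<epsilon>^2" using assms(2) by simp
    finally have "norm (f z)^2 < \<epsilon>^2" .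
    then show ?thesis using assms(2) by (simp add: power_less_imp_less_base)
  qed
  then show ?thesis using ep by blast
qed

lemma LemC:
  assumes "good Q"
  shows "\<exists>K>0. \<forall>f g a b w. (\<forall>u\<in>torus. norm (f u) \<le> a) \<longrightarrow> (\<forall>u\<in>torus. norm (g u) \<le> b) \<longrightarrow>
      norm (bm_inner Q f g w) \<le> K * a * b"
proof -
  obtain d B where b: "0 < d" "\<forall>z\<in>torus. d \<le> norm (deriv Q z) \<and> norm (deriv Q z) \<le> B"
    using assms unfolding good_def by blast
  obtain N where n: "\<forall>w. finite (fib Q w) \<and> card (fib Q w) \<le> N" using assms unfolding good_def by blast
  define K where "K = (real N + 1) / d"
  have Kp: "K > 0" unfolding K_def using b(1) by simp
  have "norm (bm_inner Q f g w) \<le> K * a * b"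
    if fa: "\<forall>u\<in>torus. norm (f u) \<le> a" and gb: "\<forall>u\<in>torus. norm (g u) \<le> b" for f g a b w
  proof -
    have a0: "0 \<le> a" using fa one_torus by (meson norm_ge_zero order.trans)
    have b0: "0 \<le> b" using gb one_torus by (meson norm_ge_zero order.trans)
    show ?thesis
    proof (cases "w \<in> torus")
      case False
      then show ?thesis using a0 b0 Kp by (simp add: bm_inner_out)
    next
      case w: True
      have tm: "norm (cnj (f u) * g u / complex_of_real (norm (deriv Q u))) \<le> a * b / d"
        if u: "u \<in> fib Q w" for u
      proof -
        have ut: "u \<in> torus" using u by (simp add: fib_def)
        have du: "d \<le> norm (deriv Q u)" using b ut by auto
        have "norm (cnj (f u) * g u / complex_of_real (norm (deriv Q u))) = norm (f u) * norm (g u) / norm (deriv Q u)"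
          by (simp add: norm_mult norm_divide)
        also have "\<dots> \<le> a * b / d"
          by (rule frac_le) (use fa gb ut du b(1) a0 b0 in \<open>auto intro: mult_mono\<close>)
        finally show ?thesis .
      qed
      have "norm (bm_inner Q f g w) \<le> (\<Sum>u\<in>fib Q w. a * b / d)"
        unfolding bm_inner_in[OF w] by (rule sum_norm_le) (rule tm)
      also have "\<dots> = real (card (fib Q w)) * (a * b / d)" by simp
      also have "\<dots> \<le> (real N + 1) * (a * b / d)"
      proof (rule mult_right_mono)
        have "card (fib Q w) \<le> N" using n by blast
        then have "real (card (fib Q w)) \<le> real N" by simp
        then show "real (card (fib Q w)) \<le> real N + 1" by linarith
      qed (use a0 b0 b(1) in simp)
      also have "\<dots> = K * a * b" unfolding K_def by simp
      finally show ?thesis .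
    qed
  qed
  then show ?thesis using Kp by blast
qed

lemma bi_diff:
  "bm_inner Q f g w - bm_inner Q f' g' w =
   bm_inner Q (\<lambda>z. f z - f' z) g w + bm_inner Q f' (\<lambda>z. g z - g' z) w"
  by (simp add: bm_inner_def sum_subtractf[symmetric] sum.distrib[symmetric] diff_divide_distrib[symmetric]
      add_divide_distrib[symmetric] algebra_simps)




definition PsiL :: "cfun \<Rightarrow> nat \<Rightarrow> (nat \<Rightarrow> etensor list) \<Rightarrow> cfun" where
  "PsiL R m s = (\<lambda>z. if z \<in> torus then lim (\<lambda>n. Psi0 R m (s n) z) else 0)"

context
  fixes R :: cfun and m :: nat
  assumes gR: "good R" and m1: "m \<ge> 1"
begin

lemma gQ: "good (R ^^ m)" by (rule good_pow[OF gR])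

lemma Psi0_tdiff_fun: "Psi0 R m (tdiff a b) = (\<lambda>z. Psi0 R m a z - Psi0 R m b z)"
  by (simp add: fun_eq_iff Psi0_tdiff)

lemma sinner_tdiff: "sinner R m (tdiff a b) (tdiff a b) w =
  bm_inner (R ^^ m) (\<lambda>z. Psi0 R m a z - Psi0 R m b z) (\<lambda>z. Psi0 R m a z - Psi0 R m b z) w"
  unfolding sinner_eq[OF gR m1] Psi0_tdiff_fun ..

lemma small_diff:
  assumes "\<epsilon> > 0"
  shows "\<exists>e>0. \<forall>a b z. z \<in> torus \<longrightarrow> tsmall R m (tdiff a b) e \<longrightarrow> norm (Psi0 R m a z - Psi0 R m b z) < \<epsilon>"
proof -
  obtain e where e: "e > 0" "\<forall>f z. z \<in> torus \<longrightarrow> (\<forall>w\<in>torus. norm (bm_inner (R ^^ m) f f w) \<le> e) \<longrightarrow> norm (f z) < \<epsilon>"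
    using LemA'[OF gQ assms] by blast
  show ?thesis
  proof (intro exI[of _ e] conjI allI impI)
    fix a b z assume z: "z \<in> torus" and sm: "tsmall R m (tdiff a b) e"
    have "\<forall>w\<in>torus. norm (bm_inner (R ^^ m) (\<lambda>z. Psi0 R m a z - Psi0 R m b z) (\<lambda>z. Psi0 R m a z - Psi0 R m b z) w) \<le> e"
      using sm unfolding tsmall_def sinner_tdiff .
    then show "norm (Psi0 R m a z - Psi0 R m b z) < \<epsilon>" using e(2) z by blast
  qed (use e in simp)
qed

lemma UL:
  assumes "tcauchy R m s"
  shows "uniform_limit torus (\<lambda>n. Psi0 R m (s n)) (PsiL R m s) sequentially"
proof -
  have "uniformly_Cauchy_on torus (\<lambda>n. Psi0 R m (s n))"
    unfolding uniformly_Cauchy_on_def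
  proof (intro allI impI)
    fix \<epsilon> :: real assume "\<epsilon> > 0"
    then obtain e where e: "e > 0" "\<forall>a b z. z \<in> torus \<longrightarrow> tsmall R m (tdiff a b) e \<longrightarrow> norm (Psi0 R m a z - Psi0 R m b z) < \<epsilon>"
      using small_diff by blast
    obtain N where N: "\<forall>n\<ge>N. \<forall>k\<ge>N. tsmall R m (tdiff (s n) (s k)) e"
      using assms e(1) unfolding tcauchy_def by blast
    show "\<exists>M. \<forall>x\<in>torus. \<forall>n\<ge>M. \<forall>k\<ge>M. dist (Psi0 R m (s n) x) (Psi0 R m (s k) x) < \<epsilon>"
    proof (intro exI[of _ N] ballI allI impI)
      fix x n k assume "x \<in> torus" "N \<le> n" "N \<le> k"
      then show "dist (Psi0 R m (s n) x) (Psi0 R m (s k) x) < \<epsilon>"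
        using N e(2) by (simp add: dist_norm)
    qed
  qed
  then obtain l where l: "uniform_limit torus (\<lambda>n. Psi0 R m (s n)) l sequentially"
    using Cauchy_uniformly_convergent unfolding uniformly_convergent_on_def by blast
  have eq: "l z = PsiL R m s z" if z: "z \<in> torus" for z
  proof -
    have "(\<lambda>n. Psi0 R m (s n) z) \<longlonglongrightarrow> l z" by (rule tendsto_uniform_limitI[OF l z])
    then show ?thesis using z unfolding PsiL_def by (simp add: limI)
  qed
  have "uniform_limit torus (\<lambda>n. Psi0 R m (s n)) l sequentially \<longleftrightarrow>
        uniform_limit torus (\<lambda>n. Psi0 R m (s n)) (PsiL R m s) sequentially"
    by (rule uniform_limit_cong) (use eq in auto)
  then show ?thesis using l by simp
qed

lemma PW:
  assumes "tcauchy R m s" "z \<in> torus"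
  shows "(\<lambda>n. Psi0 R m (s n) z) \<longlonglongrightarrow> PsiL R m s z"
  by (rule tendsto_uniform_limitI[OF UL[OF assms(1)] assms(2)])

lemma PsiL_eqI:
  assumes "\<And>z. z \<in> torus \<Longrightarrow> (\<lambda>n. Psi0 R m (t n) z) \<longlonglongrightarrow> f z" "\<And>z. z \<notin> torus \<Longrightarrow> f z = 0"
  shows "PsiL R m t = f"
  using assms by (auto simp: PsiL_def fun_eq_iff limI)

lemma PsiL_CT:
  assumes "tcauchy R m s"
  shows "PsiL R m s \<in> CT"
proof -
  have "continuous_on torus (PsiL R m s)"
  proof (rule uniform_limit_theorem[OF _ UL[OF assms]])
    show "\<forall>\<^sub>F n in sequentially. continuous_on torus (Psi0 R m (s n))"
      using assms Psi0_cont[OF gR _ m1] unfolding tcauchy_def by simp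
  qed simp
  then show ?thesis unfolding CT_def PsiL_def by simp
qed

end




context
  fixes R :: cfun and m :: nat
  assumes gR: "good R" and m1: "m \<ge> 1"
begin

lemma inj1:
  assumes s: "tcauchy R m s" and t: "tcauchy R m t" and eq: "tequiv R m s t"
  shows "PsiL R m s = PsiL R m t"
proof
  fix z
  show "PsiL R m s z = PsiL R m t z"
  proof (cases "z \<in> torus")
    case False then show ?thesis by (simp add: PsiL_def)
  next
    case z: True
    have A: "(\<lambda>n. Psi0 R m (s n) z - Psi0 R m (t n) z) \<longlonglongrightarrow> PsiL R m s z - PsiL R m t z"
      by (intro tendsto_diff PW[OF gR m1 s z] PW[OF gR m1 t z])
    have B: "(\<lambda>n. Psi0 R m (s n) z - Psi0 R m (t n) z) \<longlonglongrightarrow> 0"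
      unfolding LIMSEQ_iff
    proof (intro allI impI)
      fix r :: real assume "r > 0"
      then obtain e where e: "e > 0" "\<forall>a b z. z \<in> torus \<longrightarrow> tsmall R m (tdiff a b) e \<longrightarrow> norm (Psi0 R m a z - Psi0 R m b z) < r"
        using small_diff[OF gR m1] by blast
      obtain N where N: "\<forall>n\<ge>N. tsmall R m (tdiff (s n) (t n)) e" using eq e(1) unfolding tequiv_def by blast
      show "\<exists>no. \<forall>n\<ge>no. norm (Psi0 R m (s n) z - Psi0 R m (t n) z - 0) < r"
        using N e(2) z by (intro exI[of _ N]) simp
    qed
    have "PsiL R m s z - PsiL R m t z = 0" using LIMSEQ_unique[OF A B] .
    then show ?thesis by simp
  qed
qed

lemma inj2:
  assumes s: "tcauchy R m s" and t: "tcauchy R m t" and eq: "PsiL R m s = PsiL R m t"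
  shows "tequiv R m s t"
  unfolding tequiv_def
proof (intro allI impI)
  fix e :: real assume e: "e > 0"
  obtain K where K: "K > 0" "\<forall>f g a b w. (\<forall>u\<in>torus. norm (f u) \<le> a) \<longrightarrow> (\<forall>u\<in>torus. norm (g u) \<le> b) \<longrightarrow>
      norm (bm_inner (R ^^ m) f g w) \<le> K * a * b"
    using LemC[OF gQ[OF gR m1]] by blast
  define a where "a = min 1 (e / K)"
  have a0: "a > 0" unfolding a_def using e K(1) by simp
  have "\<forall>\<^sub>F n in sequentially. (\<forall>x\<in>torus. dist (Psi0 R m (s n) x) (PsiL R m s x) < a / 2) \<and>
      (\<forall>x\<in>torus. dist (Psi0 R m (t n) x) (PsiL R m t x) < a / 2)"
    using a0 by (intro eventually_conj uniform_limitD[OF UL[OF gR m1 s]] uniform_limitD[OF UL[OF gR m1 t]]) auto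
  then obtain N where N: "\<And>n. n \<ge> N \<Longrightarrow> (\<forall>x\<in>torus. dist (Psi0 R m (s n) x) (PsiL R m s x) < a / 2) \<and>
      (\<forall>x\<in>torus. dist (Psi0 R m (t n) x) (PsiL R m t x) < a / 2)"
    unfolding eventually_sequentially by blast
  show "\<exists>N. \<forall>n\<ge>N. tsmall R m (tdiff (s n) (t n)) e"
  proof (intro exI[of _ N] allI impI)
    fix n assume n: "n \<ge> N"
    have D: "\<forall>u\<in>torus. norm (Psi0 R m (s n) u - Psi0 R m (t n) u) \<le> a"
    proof
      fix u assume u: "u \<in> torus"
      have "norm (Psi0 R m (s n) u - Psi0 R m (t n) u) \<le>
          dist (Psi0 R m (s n) u) (PsiL R m s u) + dist (Psi0 R m (t n) u) (PsiL R m t u)"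
      proof -
        have "Psi0 R m (s n) u - Psi0 R m (t n) u = (Psi0 R m (s n) u - PsiL R m s u) - (Psi0 R m (t n) u - PsiL R m t u)"
          using eq by simp
        then show ?thesis unfolding dist_norm by (metis norm_triangle_ineq4)
      qed
      also have "\<dots> < a / 2 + a / 2" using N[OF n] u by (intro add_strict_mono) auto
      finally show "norm (Psi0 R m (s n) u - Psi0 R m (t n) u) \<le> a" by simp
    qed
    show "tsmall R m (tdiff (s n) (t n)) e"
      unfolding tsmall_def sinner_tdiff[OF gR m1]
    proof
      fix w assume "w \<in> torus"
      have "norm (bm_inner (R ^^ m) (\<lambda>z. Psi0 R m (s n) z - Psi0 R m (t n) z)
                (\<lambda>z. Psi0 R m (s n) z - Psi0 R m (t n) z) w) \<le> K * a * a"
        by (rule K(2)[rule_format]) (use D in auto)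
      also have "\<dots> \<le> K * (e / K) * 1"
        using K(1) a0 e by (intro mult_mono) (auto simp: a_def)
      also have "\<dots> = e" using K(1) by simp
      finally show "norm (bm_inner (R ^^ m) (\<lambda>z. Psi0 R m (s n) z - Psi0 R m (t n) z)
                (\<lambda>z. Psi0 R m (s n) z - Psi0 R m (t n) z) w) \<le> e" .
    qed
  qed
qed

end




context
  fixes R :: cfun and m :: nat
  assumes gR: "good R" and m1: "m \<ge> 1"
begin

lemma iso_add:
  assumes s: "tcauchy R m s" and t: "tcauchy R m t"
  shows "PsiL R m (\<lambda>n. s n @ t n) = (\<lambda>z. PsiL R m s z + PsiL R m t z)"
proof (rule PsiL_eqI[OF gR m1])
  fix z assume z: "z \<in> torus"
  show "(\<lambda>n. Psi0 R m (s n @ t n) z) \<longlonglongrightarrow> PsiL R m s z + PsiL R m t z"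
    unfolding Psi0_append by (intro tendsto_add PW[OF gR m1 s z] PW[OF gR m1 t z])
qed (simp add: PsiL_def)

lemma iso_scale:
  assumes s: "tcauchy R m s"
  shows "PsiL R m (\<lambda>n. tscale c (s n)) = (\<lambda>z. c * PsiL R m s z)"
proof (rule PsiL_eqI[OF gR m1])
  fix z assume z: "z \<in> torus"
  show "(\<lambda>n. Psi0 R m (tscale c (s n)) z) \<longlonglongrightarrow> c * PsiL R m s z"
    unfolding Psi0_tscale by (intro tendsto_mult_left PW[OF gR m1 s z])
qed (simp add: PsiL_def)

lemma iso_lact:
  assumes s: "tcauchy R m s"
  shows "PsiL R m (\<lambda>n. tlact a (s n)) = lact a (PsiL R m s)"
  unfolding lact_def
proof (rule PsiL_eqI[OF gR m1])
  fix z assume z: "z \<in> torus"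
  show "(\<lambda>n. Psi0 R m (tlact a (s n)) z) \<longlonglongrightarrow> a z * PsiL R m s z"
    unfolding Psi0_tlact by (intro tendsto_mult_left PW[OF gR m1 s z])
qed (simp add: PsiL_def)

lemma iso_ract:
  assumes s: "tcauchy R m s"
  shows "PsiL R m (\<lambda>n. tract R m (s n) b) = ract (R ^^ m) (PsiL R m s) b"
  unfolding ract_def
proof (rule PsiL_eqI[OF gR m1])
  fix z assume z: "z \<in> torus"
  show "(\<lambda>n. Psi0 R m (tract R m (s n) b) z) \<longlonglongrightarrow> PsiL R m s z * b ((R ^^ m) z)"
    unfolding Psi0_tract[OF m1] by (intro tendsto_mult_right PW[OF gR m1 s z])
qed (simp add: PsiL_def)

lemma CT_bounded:
  assumes "f \<in> CT"
  shows "\<exists>A>0. \<forall>z\<in>torus. norm (f z) \<le> A"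
proof -
  have "compact (f ` torus)"
    using assms by (intro compact_continuous_image) (auto simp: CT_def torus_def)
  then have "bounded (f ` torus)" by (rule compact_imp_bounded)
  then show ?thesis unfolding bounded_pos by auto
qed

lemma iso_inner:
  assumes s: "tcauchy R m s" and t: "tcauchy R m t" and e: "e > 0"
  shows "\<exists>N. \<forall>n\<ge>N. \<forall>w\<in>torus. norm (sinner R m (s n) (t n) w - bm_inner (R ^^ m) (PsiL R m s) (PsiL R m t) w) \<le> e"
proof -
  obtain K where K: "K > 0" "\<forall>f g a b w. (\<forall>u\<in>torus. norm (f u) \<le> a) \<longrightarrow> (\<forall>u\<in>torus. norm (g u) \<le> b) \<longrightarrow>
      norm (bm_inner (R ^^ m) f g w) \<le> K * a * b"
    using LemC[OF gQ[OF gR m1]] by blast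
  obtain A where A: "A > 0" "\<forall>z\<in>torus. norm (PsiL R m s z) \<le> A"
    using CT_bounded[OF PsiL_CT[OF gR m1 s]] by blast
  obtain A' where A': "A' > 0" "\<forall>z\<in>torus. norm (PsiL R m t z) \<le> A'"
    using CT_bounded[OF PsiL_CT[OF gR m1 t]] by blast
  define \<eta> where "\<eta> = min 1 (e / (K * (A + A' + 1)))"
  have KA: "K * (A + A' + 1) > 0" using K(1) A(1) A'(1) by simp
  have \<eta>0: "\<eta> > 0" unfolding \<eta>_def using e KA by simp
  have \<eta>1: "\<eta> \<le> 1" "\<eta> \<le> e / (K * (A + A' + 1))" unfolding \<eta>_def by auto
  have "\<forall>\<^sub>F n in sequentially. (\<forall>x\<in>torus. dist (Psi0 R m (s n) x) (PsiL R m s x) < \<eta>) \<and>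
      (\<forall>x\<in>torus. dist (Psi0 R m (t n) x) (PsiL R m t x) < \<eta>)"
    using \<eta>0 by (intro eventually_conj uniform_limitD[OF UL[OF gR m1 s]] uniform_limitD[OF UL[OF gR m1 t]]) auto
  then obtain N where N: "\<And>n. n \<ge> N \<Longrightarrow> (\<forall>x\<in>torus. dist (Psi0 R m (s n) x) (PsiL R m s x) < \<eta>) \<and>
      (\<forall>x\<in>torus. dist (Psi0 R m (t n) x) (PsiL R m t x) < \<eta>)"
    unfolding eventually_sequentially by blast
  show ?thesis
  proof (intro exI[of _ N] allI impI ballI)
    fix n w assume n: "n \<ge> N" and w: "w \<in> torus"
    define fn where "fn = Psi0 R m (s n)"
    define gn where "gn = Psi0 R m (t n)"
    define f where "f = PsiL R m s"
    define g where "g = PsiL R m t"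
    have d1: "\<forall>u\<in>torus. norm (fn u - f u) \<le> \<eta>" using N[OF n] unfolding fn_def f_def dist_norm
      by (simp add: less_imp_le)
    have d2: "\<forall>u\<in>torus. norm (gn u - g u) \<le> \<eta>" using N[OF n] unfolding gn_def g_def dist_norm
      by (simp add: less_imp_le)
    have gb: "\<forall>u\<in>torus. norm (gn u) \<le> A' + 1"
    proof
      fix u assume u: "u \<in> torus"
      have "norm (gn u) \<le> norm (gn u - g u) + norm (g u)" using norm_triangle_ineq[of "gn u - g u" "g u"] by simp
      also have "\<dots> \<le> 1 + A'"
      proof (rule add_mono)
        show "norm (gn u - g u) \<le> 1" using d2 u \<eta>1(1) by (meson order.trans)
        show "norm (g u) \<le> A'" using A'(2) u unfolding g_def by blast
      qed
      finally show "norm (gn u) \<le> A' + 1" by simp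
    qed
    have fb: "\<forall>u\<in>torus. norm (f u) \<le> A" using A(2) unfolding f_def .
    have "sinner R m (s n) (t n) w - bm_inner (R ^^ m) f g w = bm_inner (R ^^ m) fn gn w - bm_inner (R ^^ m) f g w"
      unfolding sinner_eq[OF gR m1] fn_def gn_def ..
    also have "\<dots> = bm_inner (R ^^ m) (\<lambda>z. fn z - f z) gn w + bm_inner (R ^^ m) f (\<lambda>z. gn z - g z) w"
      by (rule bi_diff)
    finally have eq: "sinner R m (s n) (t n) w - bm_inner (R ^^ m) f g w = \<dots>" .
    have "norm (sinner R m (s n) (t n) w - bm_inner (R ^^ m) f g w) \<le>
       norm (bm_inner (R ^^ m) (\<lambda>z. fn z - f z) gn w) + norm (bm_inner (R ^^ m) f (\<lambda>z. gn z - g z) w)"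
      unfolding eq by (rule norm_triangle_ineq)
    also have "\<dots> \<le> K * \<eta> * (A' + 1) + K * A * \<eta>"
    proof (rule add_mono)
      show "norm (bm_inner (R ^^ m) (\<lambda>z. fn z - f z) gn w) \<le> K * \<eta> * (A' + 1)"
        by (rule K(2)[rule_format]) (use d1 gb in auto)
      show "norm (bm_inner (R ^^ m) f (\<lambda>z. gn z - g z) w) \<le> K * A * \<eta>"
        by (rule K(2)[rule_format]) (use d2 fb in auto)
    qed
    also have "\<dots> = \<eta> * (K * (A + A' + 1))" by (simp add: algebra_simps)
    also have "\<dots> \<le> e / (K * (A + A' + 1)) * (K * (A + A' + 1))"
      using \<eta>1(2) KA by (intro mult_right_mono) auto
    also have "\<dots> = e" using KA by (metis less_irrefl divide_eq_eq)
    finally show "norm (sinner R m (s n) (t n) w - bm_inner (R ^^ m) (PsiL R m s) (PsiL R m t) w) \<le> e"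
      unfolding f_def g_def .
  qed
qed

lemma single_cauchy:
  assumes x: "\<forall>i<m. x i \<in> CT"
  shows "tcauchy R m (\<lambda>n. [x])"
  unfolding tcauchy_def
proof (intro conjI allI impI)
  show "[x] \<in> tsums m" for n using x by (simp add: tsums_def)
  fix e :: real assume e: "e > 0"
  have "tsmall R m (tdiff [x] [x]) e"
    unfolding tsmall_def sinner_tdiff[OF gR m1] using e by (simp add: bm_inner_def)
  then show "\<exists>N. \<forall>n\<ge>N. \<forall>k\<ge>N. tsmall R m (tdiff [x] [x]) e" by blast
qed

lemma single_Psi:
  assumes x: "\<forall>i<m. x i \<in> CT"
  shows "PsiL R m (\<lambda>n. [x]) = (\<lambda>z. \<Prod>i<m. x i ((R ^^ i) z))"
proof (rule PsiL_eqI[OF gR m1])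
  fix z assume "z \<in> torus"
  show "(\<lambda>n. Psi0 R m [x] z) \<longlonglongrightarrow> (\<Prod>i<m. x i ((R ^^ i) z))"
    unfolding Psi0_single[OF m1] by simp
next
  fix z assume z: "z \<notin> torus"
  have "x 0 z = 0" using x m1 z by (auto simp: CT_def)
  then show "(\<Prod>i<m. x i ((R ^^ i) z)) = 0" using m1
    by (intro prod_zero) (auto intro!: bexI[of _ 0])
qed

lemma surj:
  assumes f: "f \<in> CT"
  shows "\<exists>s. tcauchy R m s \<and> PsiL R m s = f"
proof -
  define ind :: cfun where "ind = (\<lambda>z. if z \<in> torus then 1 else 0)"
  have ind: "ind \<in> CT" unfolding CT_def ind_def
    by (auto intro: continuous_on_eq[OF continuous_on_const[of torus 1]])
  define x :: etensor where "x = (\<lambda>i. if i = 0 then f else ind)"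
  have x: "\<forall>i<m. x i \<in> CT" using f ind by (simp add: x_def)
  obtain m' where m': "m = Suc m'" using m1 by (cases m) auto
  have "(\<Prod>i<m. x i ((R ^^ i) z)) = f z" for z
  proof (cases "z \<in> torus")
    case True
    have "(R ^^ Suc i) z \<in> torus" for i using good_torus[OF good_pow[OF gR] True] .
    then show ?thesis unfolding m' prod.lessThan_Suc_shift by (simp add: x_def ind_def del: funpow.simps)
  next
    case False
    then have "f z = 0" using f by (simp add: CT_def)
    then show ?thesis unfolding m' prod.lessThan_Suc_shift by (simp add: x_def)
  qed
  then show ?thesis using single_cauchy[OF x] single_Psi[OF x] by (intro exI[of _ "\<lambda>n. [x]"]) auto
qed

end

theorem proposition4p5:
  fixes R :: "complex \<Rightarrow> complex" and m :: nat
  assumes "fin_blaschke R" and "m \<ge> 1"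
  shows "\<exists>\<Psi>. hbm_iso R m (R ^^ m) \<Psi> \<and>
    (\<forall>x. (\<forall>i<m. x i \<in> CT) \<longrightarrow> \<Psi> (\<lambda>n. [x]) = (\<lambda>z. \<Prod>i<m. x i ((R ^^ i) z)))"
proof -
  have gR: "good R" by (rule blaschke_good[OF assms(1)])
  note m1 = assms(2)
  have "hbm_iso R m (R ^^ m) (PsiL R m)"
    unfolding hbm_iso_def
  proof (intro conjI allI impI ballI)
    show "PsiL R m s \<in> CT" if "tcauchy R m s" for s using PsiL_CT[OF gR m1 that] .
    show "PsiL R m s = PsiL R m t \<longleftrightarrow> tequiv R m s t" if "tcauchy R m s" "tcauchy R m t" for s t
      using inj1[OF gR m1 that] inj2[OF gR m1 that] by blast
    show "\<exists>s. tcauchy R m s \<and> PsiL R m s = f" if "f \<in> CT" for f using surj[OF gR m1 that] .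
    show "PsiL R m (\<lambda>n. s n @ t n) = (\<lambda>z. PsiL R m s z + PsiL R m t z)" if "tcauchy R m s" "tcauchy R m t" for s t
      using iso_add[OF gR m1 that] .
    show "PsiL R m (\<lambda>n. tscale c (s n)) = (\<lambda>z. c * PsiL R m s z)" if "tcauchy R m s" for s c
      using iso_scale[OF gR m1 that] .
    show "\<exists>N. \<forall>n\<ge>N. \<forall>w\<in>torus. norm (sinner R m (s n) (t n) w - bm_inner (R ^^ m) (PsiL R m s) (PsiL R m t) w) \<le> e"
      if "tcauchy R m s" "tcauchy R m t" "e > 0" for s t e using iso_inner[OF gR m1 that] .
    show "PsiL R m (\<lambda>n. tlact a (s n)) = lact a (PsiL R m s)" if "tcauchy R m s" "a \<in> CT" for s a
      using iso_lact[OF gR m1 that(1)] .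
    show "PsiL R m (\<lambda>n. tract R m (s n) b) = ract (R ^^ m) (PsiL R m s) b" if "tcauchy R m s" "b \<in> CT" for s b
      using iso_ract[OF gR m1 that(1)] .
  qed
  moreover have "\<forall>x. (\<forall>i<m. x i \<in> CT) \<longrightarrow> PsiL R m (\<lambda>n. [x]) = (\<lambda>z. \<Prod>i<m. x i ((R ^^ i) z))"
    using single_Psi[OF gR m1] by blast
  ultimately show ?thesis by blast
qed



end
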